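(* Let $k\geq3$, $A=\{0,1,\dots,k-1\}$, $N=k-1$ and let $T\colon A^{N^2}\to A$ be given by $T(x_{1,1},\dots,x_{1,N},\dots,x_{N,1},\dots,x_{N,N})=1$ if $x_{i,j}=i$ for all $i,j$ or $x_{i,j}=j$ for all $i,j$, and $0$ otherwise. Then \[\langle\{T\}\rangle\subseteq\{T\}^{**}\subseteq\{T\}^{*(1)*}\subseteq\mathrm{Pol}\bigl(\{U\subseteq A: 0\in U\}\bigr)\cap\mathrm{Pol}\bigl(\{\theta\in\mathrm{Eq}(A): (0,1)\in\theta\}\bigr),\] where $\mathrm{Eq}(A)$ denotes the set of all equivalence relations on $A$.
   Context: An $m$-ary $g$ commutes with an $n$-ary $h$ if $g\bigl((h((x_{ij})_{j}))_{i}\bigr)=h\bigl((g((x_{ij})_{i}))_{j}\bigr)$ for all $(x_{ij})\in A^{m\times n}$. For a set $F$ of finitary operations on $A$ (positive arity), $F^*$ is the set of all such operations commuting with every member of $F$; superscripts apply left to right, so $\{T\}^{**}=(\{T\}^* )^*$ and $\{T\}^{*(1)*}=((\{T\}^* )^{(1)})^*$, where $G^{(1)}$ is the set of unary members of $G$. $\langle\{T\}\rangle$ is the clone generated by $T$. For a set $Q$ of relations on $A$, $\mathrm{Pol}(Q)$ is the set of finitary operations preserving every relation in $Q$ (unary relations $U$ and binary relations $\theta$ are viewed as relations of arity 1 and 2). *)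

theory Defs
  imports "HOL-Library.FuncSet"
begin

text \<open>A finitary operation on a carrier A is represented as a pair (n, f) with
  n > 0 its arity and f a function from A^n (tuples = functions on {..<n}, extensional)
  into A, itself extensional (value undefined outside A^n).\<close>

definition tuples :: "'a set \<Rightarrow> nat \<Rightarrow> (nat \<Rightarrow> 'a) set" where
  "tuples A n = PiE {..<n} (\<lambda>_. A)"

definition ops :: "'a set \<Rightarrow> (nat \<times> ((nat \<Rightarrow> 'a) \<Rightarrow> 'a)) set" where
  "ops A = {(n, f). 0 < n \<and> f \<in> tuples A n \<rightarrow> A \<and> f \<in> extensional (tuples A n)}"

definition commutes :: "'a set \<Rightarrow> nat \<times> ((nat \<Rightarrow> 'a) \<Rightarrow> 'a) \<Rightarrow> nat \<times> ((nat \<Rightarrow> 'a) \<Rightarrow> 'a) \<Rightarrow> bool" where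
  "commutes A G H = (case G of (m, g) \<Rightarrow> case H of (n, h) \<Rightarrow>
     (\<forall>x :: nat \<Rightarrow> nat \<Rightarrow> 'a. (\<forall>i<m. \<forall>j<n. x i j \<in> A) \<longrightarrow>
        g (\<lambda>i\<in>{..<m}. h (\<lambda>j\<in>{..<n}. x i j)) = h (\<lambda>j\<in>{..<n}. g (\<lambda>i\<in>{..<m}. x i j))))"

definition centralizer :: "'a set \<Rightarrow> (nat \<times> ((nat \<Rightarrow> 'a) \<Rightarrow> 'a)) set \<Rightarrow> (nat \<times> ((nat \<Rightarrow> 'a) \<Rightarrow> 'a)) set" where
  "centralizer A F = {H \<in> ops A. \<forall>G\<in>F. commutes A G H}"

definition unary_part :: "(nat \<times> ((nat \<Rightarrow> 'a) \<Rightarrow> 'a)) set \<Rightarrow> (nat \<times> ((nat \<Rightarrow> 'a) \<Rightarrow> 'a)) set" where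
  "unary_part G = {H \<in> G. fst H = 1}"

definition proj :: "'a set \<Rightarrow> nat \<Rightarrow> nat \<Rightarrow> nat \<times> ((nat \<Rightarrow> 'a) \<Rightarrow> 'a)" where
  "proj A n i = (n, \<lambda>x\<in>tuples A n. x i)"

definition compose :: "'a set \<Rightarrow> nat \<times> ((nat \<Rightarrow> 'a) \<Rightarrow> 'a) \<Rightarrow> nat \<Rightarrow> (nat \<Rightarrow> (nat \<Rightarrow> 'a) \<Rightarrow> 'a) \<Rightarrow> nat \<times> ((nat \<Rightarrow> 'a) \<Rightarrow> 'a)" where
  "compose A G n hs = (n, \<lambda>x\<in>tuples A n. snd G (\<lambda>i\<in>{..<fst G}. hs i x))"

definition is_clone :: "'a set \<Rightarrow> (nat \<times> ((nat \<Rightarrow> 'a) \<Rightarrow> 'a)) set \<Rightarrow> bool" where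
  "is_clone A C \<longleftrightarrow> C \<subseteq> ops A \<and> (\<forall>n i. 0 < n \<and> i < n \<longrightarrow> proj A n i \<in> C) \<and>
     (\<forall>G\<in>C. \<forall>n hs. 0 < n \<and> (\<forall>i<fst G. (n, hs i) \<in> C) \<longrightarrow> compose A G n hs \<in> C)"

definition clone_gen :: "'a set \<Rightarrow> (nat \<times> ((nat \<Rightarrow> 'a) \<Rightarrow> 'a)) set \<Rightarrow> (nat \<times> ((nat \<Rightarrow> 'a) \<Rightarrow> 'a)) set" where
  "clone_gen A F = \<Inter> {C. is_clone A C \<and> F \<subseteq> C}"

definition Pol_unary :: "'a set \<Rightarrow> 'a set set \<Rightarrow> (nat \<times> ((nat \<Rightarrow> 'a) \<Rightarrow> 'a)) set" where
  "Pol_unary A Q = {(n, f) \<in> ops A. \<forall>U\<in>Q. \<forall>x\<in>tuples A n. (\<forall>i<n. x i \<in> U) \<longrightarrow> f x \<in> U}"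

definition Pol_binary :: "'a set \<Rightarrow> ('a \<times> 'a) set set \<Rightarrow> (nat \<times> ((nat \<Rightarrow> 'a) \<Rightarrow> 'a)) set" where
  "Pol_binary A Q = {(n, f) \<in> ops A. \<forall>\<theta>\<in>Q. \<forall>x\<in>tuples A n. \<forall>y\<in>tuples A n.
       (\<forall>i<n. (x i, y i) \<in> \<theta>) \<longrightarrow> (f x, f y) \<in> \<theta>}"

text \<open>The operation T of arity N^2, N = k-1, on A = {0..<k}. Argument position
  p = (i-1)*N + (j-1) carries x_{i,j} (1 \<le> i,j \<le> N).\<close>
definition T_op :: "nat \<Rightarrow> nat \<times> ((nat \<Rightarrow> nat) \<Rightarrow> nat)" where
  "T_op k = (let N = k - 1 in
     (N^2, \<lambda>x\<in>tuples {0..<k} (N^2).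
        if (\<forall>p<N^2. x p = p div N + 1) \<or> (\<forall>p<N^2. x p = p mod N + 1) then 1 else 0))"

end

theory Submission
  imports Defs
begin

lemma commutes_sym:
  assumes "commutes A (m, g) (n, h)"
  shows "commutes A (n, h) (m, g)"
  using assms unfolding commutes_def by auto

lemma commutes_pair: "commutes A (m, g) (n, h) = (\<forall>x :: nat \<Rightarrow> nat \<Rightarrow> 'a. (\<forall>i<m. \<forall>j<n. x i j \<in> A) \<longrightarrow>
        g (\<lambda>i\<in>{..<m}. h (\<lambda>j\<in>{..<n}. x i j)) = h (\<lambda>j\<in>{..<n}. g (\<lambda>i\<in>{..<m}. x i j)))"
  by (simp add: commutes_def)

lemma ops_mem: "(n, f) \<in> ops A \<Longrightarrow> x \<in> tuples A n \<Longrightarrow> f x \<in> A"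
  unfolding ops_def by auto

lemma restrict_tuples: "(\<And>j. j < n \<Longrightarrow> f j \<in> A) \<Longrightarrow> (\<lambda>j\<in>{..<n}. f j) \<in> tuples A n"
  unfolding tuples_def by auto

lemma centralizer_antimono: "Y \<subseteq> X \<Longrightarrow> centralizer A X \<subseteq> centralizer A Y"
  unfolding centralizer_def by auto

lemma centralizer_clone:
  assumes S: "S \<subseteq> ops A"
  shows "is_clone A (centralizer A S)"
  unfolding is_clone_def
proof (intro conjI allI impI ballI)
  show "centralizer A S \<subseteq> ops A" unfolding centralizer_def by auto
next
  fix n i :: nat assume ni: "0 < n \<and> i < n"
  have "proj A n i \<in> ops A"
    unfolding proj_def ops_def tuples_def using ni by auto
  moreover have "commutes A F (proj A n i)" if F: "F \<in> S" for F
  proof -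
    obtain p \<phi> where Fp: "F = (p, \<phi>)" by fastforce
    have Fo: "(p, \<phi>) \<in> ops A" using F S Fp by auto
    show ?thesis unfolding Fp proj_def commutes_pair
    proof (intro allI impI)
      fix x :: "nat \<Rightarrow> nat \<Rightarrow> 'a" assume x: "\<forall>i<p. \<forall>j<n. x i j \<in> A"
      have e1: "(\<lambda>a\<in>{..<p}. restrict (\<lambda>x. x i) (tuples A n) (\<lambda>j\<in>{..<n}. x a j))
              = (\<lambda>a\<in>{..<p}. x a i)"
        using x ni by (intro restrict_ext) (auto simp: restrict_tuples)
      have "(\<lambda>j\<in>{..<n}. \<phi> (\<lambda>a\<in>{..<p}. x a j)) \<in> tuples A n"
        by (rule restrict_tuples, rule ops_mem[OF Fo], rule restrict_tuples) (use x in auto)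
      then show "\<phi> (\<lambda>a\<in>{..<p}. restrict (\<lambda>x. x i) (tuples A n) (\<lambda>j\<in>{..<n}. x a j)) =
           restrict (\<lambda>x. x i) (tuples A n) (\<lambda>j\<in>{..<n}. \<phi> (\<lambda>a\<in>{..<p}. x a j))"
        using e1 ni by simp
    qed
  qed
  ultimately show "proj A n i \<in> centralizer A S" unfolding centralizer_def by auto
next
  fix G n hs
  assume G: "G \<in> centralizer A S" and nh: "0 < n \<and> (\<forall>i<fst G. (n, hs i) \<in> centralizer A S)"
  obtain m g where Gm: "G = (m, g)" by fastforce
  have Go: "(m, g) \<in> ops A" using G Gm unfolding centralizer_def by auto
  have hso: "(n, hs i) \<in> ops A" if "i < m" for i using nh that Gm unfolding centralizer_def by auto
  have hsA: "hs i x \<in> A" if "i < m" "x \<in> tuples A n" for i x using ops_mem[OF hso] that by auto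
  have co: "compose A G n hs \<in> ops A"
    unfolding compose_def Gm ops_def using nh
    by (auto intro!: ops_mem[OF Go] restrict_tuples hsA)
  moreover have "commutes A F (compose A G n hs)" if F: "F \<in> S" for F
  proof -
    obtain p \<phi> where Fp: "F = (p, \<phi>)" by fastforce
    have Fo: "(p, \<phi>) \<in> ops A" using F S Fp by auto
    have cFG: "commutes A (p, \<phi>) (m, g)" using G Gm F Fp unfolding centralizer_def by auto
    have cFh: "commutes A (p, \<phi>) (n, hs i)" if "i < m" for i
      using nh that Gm F Fp unfolding centralizer_def by auto
    show ?thesis unfolding Fp compose_def Gm fst_conv snd_conv commutes_pair
    proof (intro allI impI)
      fix x :: "nat \<Rightarrow> nat \<Rightarrow> 'a" assume x: "\<forall>i<p. \<forall>j<n. x i j \<in> A"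
      have rowt: "(\<lambda>j\<in>{..<n}. x a j) \<in> tuples A n" if "a < p" for a
        using x that by (auto intro!: restrict_tuples)
      have colt: "(\<lambda>j\<in>{..<n}. \<phi> (\<lambda>a\<in>{..<p}. x a j)) \<in> tuples A n"
        by (rule restrict_tuples, rule ops_mem[OF Fo], rule restrict_tuples) (use x in auto)
      have "(\<lambda>a\<in>{..<p}. restrict (\<lambda>x. g (\<lambda>i\<in>{..<m}. hs i x)) (tuples A n) (\<lambda>j\<in>{..<n}. x a j))
          = (\<lambda>a\<in>{..<p}. g (\<lambda>i\<in>{..<m}. hs i (\<lambda>j\<in>{..<n}. x a j)))"
        using rowt by auto
      hence "\<phi> (\<lambda>a\<in>{..<p}. restrict (\<lambda>x. g (\<lambda>i\<in>{..<m}. hs i x)) (tuples A n) (\<lambda>j\<in>{..<n}. x a j))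
          = \<phi> (\<lambda>a\<in>{..<p}. g (\<lambda>i\<in>{..<m}. hs i (\<lambda>j\<in>{..<n}. x a j)))" by simp
      also have "\<dots> = g (\<lambda>i\<in>{..<m}. \<phi> (\<lambda>a\<in>{..<p}. hs i (\<lambda>j\<in>{..<n}. x a j)))"
        using cFG unfolding commutes_def using hsA rowt by auto
      also have "(\<lambda>i\<in>{..<m}. \<phi> (\<lambda>a\<in>{..<p}. hs i (\<lambda>j\<in>{..<n}. x a j)))
           = (\<lambda>i\<in>{..<m}. hs i (\<lambda>j\<in>{..<n}. \<phi> (\<lambda>a\<in>{..<p}. x a j)))"
      proof (rule restrict_ext)
        fix i assume "i \<in> {..<m}"
        then show "\<phi> (\<lambda>a\<in>{..<p}. hs i (\<lambda>j\<in>{..<n}. x a j)) = hs i (\<lambda>j\<in>{..<n}. \<phi> (\<lambda>a\<in>{..<p}. x a j))"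
          using cFh[of i] x unfolding commutes_def by auto
      qed
      finally show "\<phi> (\<lambda>a\<in>{..<p}. restrict (\<lambda>x. g (\<lambda>i\<in>{..<m}. hs i x)) (tuples A n) (\<lambda>j\<in>{..<n}. x a j)) =
           restrict (\<lambda>x. g (\<lambda>i\<in>{..<m}. hs i x)) (tuples A n) (\<lambda>j\<in>{..<n}. \<phi> (\<lambda>a\<in>{..<p}. x a j))"
        using colt by (simp only: restrict_apply')
    qed
  qed
  ultimately show "compose A G n hs \<in> centralizer A S" unfolding centralizer_def by auto
qed


lemma T_ops: assumes "k \<ge> 3" shows "T_op k \<in> ops {0..<k}"
proof -
  have "0 < (k-1)^2" using assms by simp
  then show ?thesis unfolding T_op_def Let_def ops_def using assms by auto
qed

definition unop :: "'a set \<Rightarrow> ('a \<Rightarrow> 'a) \<Rightarrow> nat \<times> ((nat \<Rightarrow> 'a) \<Rightarrow> 'a)" where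
  "unop A f = (1, \<lambda>x\<in>tuples A 1. f (x 0))"

lemma not_special:
  fixes k :: nat and f :: "nat \<Rightarrow> nat" and z :: "nat \<Rightarrow> nat"
  assumes k: "k \<ge> 3" and N: "N = k - 1" and f0: "f 0 = 0" and f1: "f 1 = 0"
    and z: "\<forall>p<N^2. \<exists>a<k. z p = f a"
    and sp: "(\<forall>p<N^2. z p = p div N + 1) \<or> (\<forall>p<N^2. z p = p mod N + 1)"
  shows False
proof -
  have sub: "{1..N} \<subseteq> f ` {2..<k}"
  proof
    fix v assume v: "v \<in> {1..N}"
    obtain p where p: "p < N^2" "z p = v"
    proof (cases "\<forall>p<N^2. z p = p div N + 1")
      case True
      have "v - 1 < N" using v by auto
      then have "(v-1)*N < N^2" by (simp add: power2_eq_square)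
      moreover have "(v-1)*N div N + 1 = v" using v by auto
      ultimately show ?thesis using that True by metis
    next
      case False
      then have h: "\<forall>p<N^2. z p = p mod N + 1" using sp by auto
      have "v - 1 < N" using v by auto
      moreover have "N \<le> N^2" by (simp add: power2_eq_square)
      ultimately have "v - 1 < N^2" by linarith
      moreover have "(v-1) mod N + 1 = v" using v by auto
      ultimately show ?thesis using that h by metis
    qed
    then obtain a where a: "a < k" "v = f a" using z by metis
    have "a \<noteq> 0" "a \<noteq> 1" using a v f0 f1 by (metis atLeastAtMost_iff not_one_le_zero)+
    then show "v \<in> f ` {2..<k}" using a by auto
  qed
  have "card {1..N} \<le> card (f ` {2..<k})" by (rule card_mono[OF _ sub]) auto
  also have "\<dots> \<le> card {2..<k}" by (rule card_image_le) auto
  finally show False using k N by auto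
qed


lemma unop_app: "v \<in> A \<Longrightarrow> snd (unop A f) (\<lambda>j\<in>{..<1}. v) = f v"
  unfolding unop_def tuples_def by auto

lemma T_val: "y \<in> tuples {0..<k} ((k-1)^2) \<Longrightarrow> snd (T_op k) y \<in> {0, 1}"
  unfolding T_op_def Let_def by auto

lemma unop_cent:
  fixes k :: nat and f :: "nat \<Rightarrow> nat"
  assumes k: "k \<ge> 3" and fA: "\<forall>a<k. f a < k" and f0: "f 0 = 0" and f1: "f 1 = 0"
  shows "unop {0..<k} f \<in> unary_part (centralizer {0..<k} {T_op k})"
proof -
  define N where "N = k - 1"
  define t where "t = snd (T_op k)"
  have Tp: "T_op k = (N^2, t)" unfolding t_def N_def T_op_def Let_def by simp
  have tdef: "t = (\<lambda>x\<in>tuples {0..<k} (N^2).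
        if (\<forall>p<N^2. x p = p div N + 1) \<or> (\<forall>p<N^2. x p = p mod N + 1) then 1 else 0)"
    unfolding t_def N_def T_op_def Let_def by simp
  have uo: "unop {0..<k} f \<in> ops {0..<k}"
    unfolding unop_def ops_def tuples_def using fA by (auto simp: PiE_iff)
  have "commutes {0..<k} (T_op k) (unop {0..<k} f)"
    unfolding Tp unop_def[of "{0..<k}" f] commutes_pair
  proof (intro allI impI)
    fix x :: "nat \<Rightarrow> nat \<Rightarrow> nat" assume x: "\<forall>i<N^2. \<forall>j<1. x i j \<in> {0..<k}"
    let ?u = "\<lambda>y\<in>tuples {0..<k} 1. f (y 0)"
    have e1: "(\<lambda>i\<in>{..<N^2}. ?u (\<lambda>j\<in>{..<1}. x i j)) = (\<lambda>i\<in>{..<N^2}. f (x i 0))"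
      using x by (intro restrict_ext) (auto simp: tuples_def)
    have ns: "\<not> ((\<forall>p<N^2. (\<lambda>i\<in>{..<N^2}. f (x i 0)) p = p div N + 1) \<or>
                (\<forall>p<N^2. (\<lambda>i\<in>{..<N^2}. f (x i 0)) p = p mod N + 1))"
    proof
      assume sp: "(\<forall>p<N^2. (\<lambda>i\<in>{..<N^2}. f (x i 0)) p = p div N + 1) \<or>
                (\<forall>p<N^2. (\<lambda>i\<in>{..<N^2}. f (x i 0)) p = p mod N + 1)"
      show False
      proof (rule not_special[OF k N_def f0 f1, of "\<lambda>i\<in>{..<N^2}. f (x i 0)"])
        show "\<forall>p<N^2. \<exists>a<k. (\<lambda>i\<in>{..<N^2}. f (x i 0)) p = f a" using x by auto
      qed (use sp in auto)
    qed
    have zt: "(\<lambda>i\<in>{..<N^2}. f (x i 0)) \<in> tuples {0..<k} (N^2)"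
      using x fA unfolding tuples_def by auto
    have L: "t (\<lambda>i\<in>{..<N^2}. ?u (\<lambda>j\<in>{..<1}. x i j)) = 0"
      unfolding e1 using ns zt by (simp add: tdef)
    have "(\<lambda>i\<in>{..<N^2}. x i 0) \<in> tuples {0..<k} (N^2)" using x unfolding tuples_def by auto
    then have ct: "t (\<lambda>i\<in>{..<N^2}. x i 0) \<in> {0,1}" using T_val[of _ k] by (simp add: t_def N_def)
    then have "t (\<lambda>i\<in>{..<N^2}. x i 0) \<in> {0..<k}" using k by auto
    then have R: "?u (\<lambda>j\<in>{..<1}. t (\<lambda>i\<in>{..<N^2}. x i j)) = f (t (\<lambda>i\<in>{..<N^2}. x i 0))"
    proof -
      have "(\<lambda>j\<in>{..<1}. t (\<lambda>i\<in>{..<N^2}. x i j)) = (\<lambda>j\<in>{..<1}. t (\<lambda>i\<in>{..<N^2}. x i 0))"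
        by (rule restrict_ext) auto
      then show ?thesis using unop_app[OF \<open>t (\<lambda>i\<in>{..<N^2}. x i 0) \<in> {0..<k}\<close>, of f]
        unfolding unop_def by simp
    qed
    show "t (\<lambda>i\<in>{..<N^2}. ?u (\<lambda>j\<in>{..<1}. x i j)) = ?u (\<lambda>j\<in>{..<1}. t (\<lambda>i\<in>{..<N^2}. x i j))"
      using L R ct f0 f1 by auto
  qed
  then show ?thesis using uo unfolding unary_part_def centralizer_def unop_def by auto
qed


lemma key:
  fixes k :: nat and f :: "nat \<Rightarrow> nat"
  assumes k: "k \<ge> 3" and fA: "\<forall>a<k. f a < k" and f0: "f 0 = 0" and f1: "f 1 = 0"
    and H: "(n, h) \<in> centralizer {0..<k} (unary_part (centralizer {0..<k} {T_op k}))"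
    and y: "y \<in> tuples {0..<k} n"
  shows "f (h y) = h (\<lambda>j\<in>{..<n}. f (y j))"
proof -
  have c: "commutes {0..<k} (unop {0..<k} f) (n, h)"
    using H unop_cent[OF k fA f0 f1] unfolding centralizer_def by auto
  have Ho: "(n, h) \<in> ops {0..<k}" using H unfolding centralizer_def by auto
  have yA: "\<forall>j<n. y j \<in> {0..<k}" using y unfolding tuples_def by auto
  have ye: "(\<lambda>j\<in>{..<n}. y j) = y" using y unfolding tuples_def by (auto simp: PiE_iff extensional_restrict)
  have hy: "h y \<in> {0..<k}" using ops_mem[OF Ho y] .
  have "snd (unop {0..<k} f) (\<lambda>i\<in>{..<1}. h (\<lambda>j\<in>{..<n}. y j))
      = h (\<lambda>j\<in>{..<n}. snd (unop {0..<k} f) (\<lambda>i\<in>{..<1}. y j))"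
    using c yA unfolding unop_def[of "{0..<k}" f] commutes_pair by (simp del: lessThan_iff)
  moreover have "snd (unop {0..<k} f) (\<lambda>i\<in>{..<1}. h (\<lambda>j\<in>{..<n}. y j)) = f (h y)"
    using unop_app[OF hy] ye by simp
  moreover have "(\<lambda>j\<in>{..<n}. snd (unop {0..<k} f) (\<lambda>i\<in>{..<1}. y j)) = (\<lambda>j\<in>{..<n}. f (y j))"
  proof (rule restrict_ext)
    fix j assume "j \<in> {..<n}"
    then have "y j \<in> {0..<k}" using yA by auto
    then show "snd (unop {0..<k} f) (\<lambda>i\<in>{..<1}. y j) = f (y j)" by (rule unop_app)
  qed
  ultimately show ?thesis by simp
qed

lemma pres_U:
  fixes k :: nat and f :: "nat \<Rightarrow> nat"
  assumes k: "k \<ge> 3" and fA: "\<forall>a<k. f a < k" and f0: "f 0 = 0" and f1: "f 1 = 0"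
    and H: "(n, h) \<in> centralizer {0..<k} (unary_part (centralizer {0..<k} {T_op k}))"
    and y: "y \<in> tuples {0..<k} n" and fU: "\<forall>a. f a \<in> U"
    and xy: "(\<lambda>j\<in>{..<n}. f (y j)) = x"
  shows "h x \<in> U"
  using key[OF k fA f0 f1 H y] xy fU by metis

theorem lemma3p5:
  fixes k :: nat
  assumes "k \<ge> 3"
  shows "clone_gen {0..<k} {T_op k} \<subseteq> centralizer {0..<k} (centralizer {0..<k} {T_op k})
       \<and> centralizer {0..<k} (centralizer {0..<k} {T_op k})
           \<subseteq> centralizer {0..<k} (unary_part (centralizer {0..<k} {T_op k}))
       \<and> centralizer {0..<k} (unary_part (centralizer {0..<k} {T_op k}))
           \<subseteq> Pol_unary {0..<k} {U. U \<subseteq> {0..<k} \<and> 0 \<in> U}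
             \<inter> Pol_binary {0..<k} {\<theta>. equiv {0..<k} \<theta> \<and> (0, 1) \<in> \<theta>}"
proof (intro conjI)
  let ?A = "{0..<k}"
  let ?C = "centralizer ?A (centralizer ?A {T_op k})"
  have cl: "is_clone ?A ?C" by (rule centralizer_clone) (auto simp: centralizer_def)
  have "T_op k \<in> ?C"
  proof -
    have "commutes ?A H (T_op k)" if "H \<in> centralizer ?A {T_op k}" for H
    proof -
      obtain n h where "H = (n, h)" by fastforce
      moreover obtain m g where "T_op k = (m, g)" by fastforce
      ultimately show ?thesis using that commutes_sym unfolding centralizer_def by auto
    qed
    then show ?thesis using T_ops[OF assms] unfolding centralizer_def by auto
  qed
  then show "clone_gen ?A {T_op k} \<subseteq> ?C" unfolding clone_gen_def using cl by (intro Inter_lower) auto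
next
  show "centralizer {0..<k} (centralizer {0..<k} {T_op k})
           \<subseteq> centralizer {0..<k} (unary_part (centralizer {0..<k} {T_op k}))"
    by (rule centralizer_antimono) (auto simp: unary_part_def)
next
  show "centralizer {0..<k} (unary_part (centralizer {0..<k} {T_op k}))
           \<subseteq> Pol_unary {0..<k} {U. U \<subseteq> {0..<k} \<and> 0 \<in> U}
             \<inter> Pol_binary {0..<k} {\<theta>. equiv {0..<k} \<theta> \<and> (0, 1) \<in> \<theta>}"
  proof
    fix H assume HC: "H \<in> centralizer {0..<k} (unary_part (centralizer {0..<k} {T_op k}))"
    obtain n h where Hn: "H = (n, h)" by fastforce
    have H: "(n, h) \<in> centralizer {0..<k} (unary_part (centralizer {0..<k} {T_op k}))" using HC Hn by simp
    have Ho: "(n, h) \<in> ops {0..<k}" using H unfolding centralizer_def by auto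
    have PU: "h x \<in> U" if U: "U \<subseteq> {0..<k}" "0 \<in> U" and x: "x \<in> tuples {0..<k} n"
      and xU: "\<forall>i<n. x i \<in> U" for U x
    proof -
      have xe: "(\<lambda>j\<in>{..<n}. x j) = x" using x unfolding tuples_def by (auto simp: PiE_iff extensional_restrict)
      show ?thesis
      proof (cases "1 \<in> U")
        case False
        define f where "f = (\<lambda>a::nat. if a \<in> U then a else 0)"
        show ?thesis
        proof (rule pres_U[OF assms _ _ _ H x, of f])
          show "(\<lambda>j\<in>{..<n}. f (x j)) = x"
          proof -
            have "(\<lambda>j\<in>{..<n}. f (x j)) = (\<lambda>j\<in>{..<n}. x j)"
              by (rule restrict_ext) (use xU in \<open>auto simp: f_def\<close>)
            then show ?thesis using xe by simp
          qed
        qed (use U False assms in \<open>auto simp: f_def\<close>)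
      next
        case True
        show ?thesis
        proof (cases "U = {0..<k}")
          case True then show ?thesis using ops_mem[OF Ho x] by simp
        next
          case False
          then have "\<exists>c. c < k \<and> c \<notin> U" using U by auto
          then obtain c where c: "c < k" "c \<notin> U" "c \<noteq> 0" using U by auto
          define f where "f = (\<lambda>a::nat. if a = c then 1 else if a \<in> U \<and> a \<noteq> 1 then a else 0)"
          define y where "y = (\<lambda>j\<in>{..<n}. if x j = 1 then c else x j)"
          have y: "y \<in> tuples {0..<k} n" using x c unfolding y_def tuples_def by (auto simp: PiE_iff)
          show ?thesis
          proof (rule pres_U[OF assms _ _ _ H y, of f])
            show "(\<lambda>j\<in>{..<n}. f (y j)) = x"
            proof -
              have "(\<lambda>j\<in>{..<n}. f (y j)) = (\<lambda>j\<in>{..<n}. x j)"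
              proof (rule restrict_ext)
                fix j assume j: "j \<in> {..<n}"
                then have "x j \<in> U" using xU by auto
                then show "f (y j) = x j" using j c unfolding f_def y_def by auto
              qed
              then show ?thesis using xe by simp
            qed
          qed (use U True c assms in \<open>auto simp: f_def\<close>)
        qed
      qed
    qed
    have PB: "(h x, h y) \<in> \<theta>" if th: "equiv {0..<k} \<theta>" "(0, 1) \<in> \<theta>"
      and x: "x \<in> tuples {0..<k} n" and y: "y \<in> tuples {0..<k} n"
      and xy: "\<forall>i<n. (x i, y i) \<in> \<theta>" for \<theta> x y
    proof -
      define f where "f = (\<lambda>a::nat. LEAST b. (a, b) \<in> \<theta>)"
      have refl: "(a, a) \<in> \<theta>" if "a < k" for a using th(1) that unfolding equiv_def refl_on_def by auto
      have fa: "(a, f a) \<in> \<theta>" "f a \<le> a" if "a < k" for a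
        unfolding f_def using refl[OF that] by (auto intro: LeastI Least_le)
      have fA: "\<forall>a<k. f a < k" using fa(2) by (meson le_less_trans)
      have f0: "f 0 = 0" using fa(2)[of 0] assms by auto
      have "(1, 0) \<in> \<theta>" using th unfolding equiv_def sym_def by auto
      then have f1: "f 1 = 0" unfolding f_def by (metis Least_le le_zero_eq)
      have feq: "f a = f b" if "(a, b) \<in> \<theta>" for a b
      proof -
        have "\<theta> `` {a} = \<theta> `` {b}" using equiv_class_eq[OF th(1) that] .
        then have "\<And>c. (a, c) \<in> \<theta> \<longleftrightarrow> (b, c) \<in> \<theta>" by blast
        then show ?thesis unfolding f_def by simp
      qed
      have "f (h x) = h (\<lambda>j\<in>{..<n}. f (x j))" by (rule key[OF assms fA f0 f1 H x])
      also have "(\<lambda>j\<in>{..<n}. f (x j)) = (\<lambda>j\<in>{..<n}. f (y j))"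
        by (rule restrict_ext) (use xy feq in auto)
      also have "h \<dots> = f (h y)" by (rule key[OF assms fA f0 f1 H y, symmetric])
      finally have e: "f (h x) = f (h y)" .
      have hx: "h x < k" "h y < k" using ops_mem[OF Ho x] ops_mem[OF Ho y] by auto
      have "(h x, f (h x)) \<in> \<theta>" "(h y, f (h y)) \<in> \<theta>" using fa(1) hx by auto
      then have a1: "(h x, f (h y)) \<in> \<theta>" and a2: "(f (h y), h y) \<in> \<theta>"
        using e th(1) unfolding equiv_def by (auto elim: symE)
      show ?thesis using a1 a2 th(1) unfolding equiv_def by (auto elim: transE)
    qed
    show "H \<in> Pol_unary {0..<k} {U. U \<subseteq> {0..<k} \<and> 0 \<in> U}
             \<inter> Pol_binary {0..<k} {\<theta>. equiv {0..<k} \<theta> \<and> (0, 1) \<in> \<theta>}"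
      unfolding Hn Pol_unary_def Pol_binary_def using Ho PU PB by auto
  qed
qed

end
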